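(* Let $G$ be a 5-vertex-critical $(P_5,\text{chair})$-free graph and let $C=v_1v_2v_3v_4v_5v_1$ be an induced $C_5$ in $G$. Then $|S^1_3(i)|\le 2$ for all $1\le i\le 5$.
   Context: All graphs are finite and simple; $P_5$ is the path on 5 vertices; the chair is a $P_4$ plus a vertex adjacent to exactly one of the two middle vertices of the $P_4$; "$H$-free" means no induced subgraph isomorphic to $H$; $G$ is $k$-vertex-critical if $\chi(G)=k$ and $\chi(G-v)<k$ for all $v$. Indices modulo 5. $S^1_3(i)=\{v\in V(G)\setminus V(C): N(v)\cap V(C)=\{v_{i-1},v_i,v_{i+1}\}\}$. *)

theory Defs
  imports Main
begin

definition simple_graph :: "'a set \<Rightarrow> ('a \<Rightarrow> 'a \<Rightarrow> bool) \<Rightarrow> bool" where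
  "simple_graph V E \<longleftrightarrow> finite V \<and> (\<forall>x y. E x y \<longrightarrow> E y x) \<and> (\<forall>x. \<not> E x x)
     \<and> (\<forall>x y. E x y \<longrightarrow> x \<in> V \<and> y \<in> V)"

definition induced_subgraph_of :: "'b set \<Rightarrow> ('b \<Rightarrow> 'b \<Rightarrow> bool) \<Rightarrow> 'a set \<Rightarrow> ('a \<Rightarrow> 'a \<Rightarrow> bool) \<Rightarrow> bool" where
  "induced_subgraph_of W F V E \<longleftrightarrow>
     (\<exists>f. inj_on f W \<and> f ` W \<subseteq> V \<and> (\<forall>x\<in>W. \<forall>y\<in>W. E (f x) (f y) \<longleftrightarrow> F x y))"

definition H_free :: "'b set \<Rightarrow> ('b \<Rightarrow> 'b \<Rightarrow> bool) \<Rightarrow> 'a set \<Rightarrow> ('a \<Rightarrow> 'a \<Rightarrow> bool) \<Rightarrow> bool" where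
  "H_free W F V E \<longleftrightarrow> \<not> induced_subgraph_of W F V E"

definition P5_V :: "nat set" where "P5_V = {0..<5}"
definition P5_E :: "nat \<Rightarrow> nat \<Rightarrow> bool" where
  "P5_E i j \<longleftrightarrow> i < 5 \<and> j < 5 \<and> (i = j + 1 \<or> j = i + 1)"

definition chair_V :: "nat set" where "chair_V = {0..<5}"
definition chair_E :: "nat \<Rightarrow> nat \<Rightarrow> bool" where
  "chair_E i j \<longleftrightarrow> {i, j} \<in> {{0,1}, {1,2}, {2,3}, {1,4}}"

definition colorable :: "'a set \<Rightarrow> ('a \<Rightarrow> 'a \<Rightarrow> bool) \<Rightarrow> nat \<Rightarrow> bool" where
  "colorable V E k \<longleftrightarrow> (\<exists>c :: 'a \<Rightarrow> nat. (\<forall>x\<in>V. c x < k) \<and>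
      (\<forall>x\<in>V. \<forall>y\<in>V. E x y \<longrightarrow> c x \<noteq> c y))"

definition chromatic_number :: "'a set \<Rightarrow> ('a \<Rightarrow> 'a \<Rightarrow> bool) \<Rightarrow> nat" where
  "chromatic_number V E = (LEAST k. colorable V E k)"

definition del_vertex_E :: "('a \<Rightarrow> 'a \<Rightarrow> bool) \<Rightarrow> 'a \<Rightarrow> 'a \<Rightarrow> 'a \<Rightarrow> bool" where
  "del_vertex_E E v x y \<longleftrightarrow> E x y \<and> x \<noteq> v \<and> y \<noteq> v"

definition vertex_critical :: "nat \<Rightarrow> 'a set \<Rightarrow> ('a \<Rightarrow> 'a \<Rightarrow> bool) \<Rightarrow> bool" where
  "vertex_critical k V E \<longleftrightarrow> chromatic_number V E = k \<and>
     (\<forall>v\<in>V. chromatic_number (V - {v}) (del_vertex_E E v) < k)"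

definition induced_C5 :: "'a set \<Rightarrow> ('a \<Rightarrow> 'a \<Rightarrow> bool) \<Rightarrow> (nat \<Rightarrow> 'a) \<Rightarrow> bool" where
  "induced_C5 V E c \<longleftrightarrow> (\<forall>i<5. c i \<in> V) \<and> inj_on c {0..<5} \<and>
     (\<forall>i<5. \<forall>j<5. E (c i) (c j) \<longleftrightarrow> (j = (i + 1) mod 5 \<or> i = (j + 1) mod 5))"

text \<open>S^1_3(i): vertices outside C whose neighbourhood on C is exactly
  {c (i-1), c i, c (i+1)} (indices mod 5).\<close>
definition S13 :: "'a set \<Rightarrow> ('a \<Rightarrow> 'a \<Rightarrow> bool) \<Rightarrow> (nat \<Rightarrow> 'a) \<Rightarrow> nat \<Rightarrow> 'a set" where
  "S13 V E c i = {v \<in> V - c ` {0..<5}.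
      {u \<in> c ` {0..<5}. E v u} = {c ((i + 4) mod 5), c (i mod 5), c ((i + 1) mod 5)}}"

end

theory Submission
  imports Defs
begin

lemma chair_E_char:
  "chair_E p q \<longleftrightarrow> (p=0\<and>q=1 \<or> p=1\<and>q=0 \<or> p=1\<and>q=2 \<or> p=2\<and>q=1 \<or> p=2\<and>q=3 \<or> p=3\<and>q=2
     \<or> p=1\<and>q=4 \<or> p=4\<and>q=1)"
  unfolding chair_E_def by (auto simp: doubleton_eq_iff)

lemma three: assumes "2 < card (S::'a set)" obtains x y z where "x \<in> S" "y \<in> S" "z \<in> S" "x \<noteq> y" "x \<noteq> z" "y \<noteq> z"
proof -
  have f: "finite S" using assms card.infinite by fastforce
  obtain x where x: "x \<in> S" using assms by fastforce
  have "1 < card (S - {x})" using assms x f by (simp add: card_Diff_singleton)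
  then have "S - {x} \<noteq> {}" by fastforce
  then obtain y where y: "y \<in> S - {x}" by blast
  have "0 < card (S - {x} - {y})" using `1 < card (S - {x})` y f by (simp add: card_Diff_singleton)
  then have "S - {x} - {y} \<noteq> {}" by fastforce
  then obtain z where z: "z \<in> S - {x} - {y}" by blast
  show ?thesis using that x y z by blast
qed

lemma i5: "(i::nat) < 5 \<Longrightarrow> i = 0 \<or> i = 1 \<or> i = 2 \<or> i = 3 \<or> i = 4" by auto

lemma S13_adj:
  assumes "x \<in> S13 V E c i" "induced_C5 V E c" "i < 5" "j < 5"
  shows "E x (c j) \<longleftrightarrow> (j = (i+4) mod 5 \<or> j = i \<or> j = (i+1) mod 5)"
proof -
  have inj: "inj_on c {0..<5}" using assms(2) unfolding induced_C5_def by blast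
  have eq: "{u \<in> c ` {0..<5}. E x u} = {c ((i + 4) mod 5), c i, c ((i + 1) mod 5)}"
    using assms(1,3) unfolding S13_def by auto
  have "E x (c j) \<longleftrightarrow> c j \<in> {u \<in> c ` {0..<5}. E x u}" using assms(4) by auto
  also have "\<dots> \<longleftrightarrow> c j \<in> {c ((i + 4) mod 5), c i, c ((i + 1) mod 5)}" using eq by simp
  also have "\<dots> \<longleftrightarrow> (j = (i+4) mod 5 \<or> j = i \<or> j = (i+1) mod 5)"
    using inj assms(3,4) by (auto dest: inj_onD)
  finally show ?thesis .
qed

lemma S13_out:
  assumes "x \<in> S13 V E c i" "j < 5" shows "x \<noteq> c j" "x \<in> V"
  using assms unfolding S13_def by auto

lemma key:
  assumes sg: "simple_graph V E" and cf: "H_free chair_V chair_E V E"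
    and C: "induced_C5 V E c" and i: "i < 5"
    and x: "x \<in> S13 V E c i" and y: "y \<in> S13 V E c i" and xy: "x \<noteq> y"
  shows "E x y"
proof (rule ccontr)
  assume nxy: "\<not> E x y"
  have sym: "\<And>u v. E u v \<Longrightarrow> E v u" and irr: "\<And>u. \<not> E u u"
    using sg unfolding simple_graph_def by blast+
  have nyx: "\<not> E y x" using nxy sym by blast
  define a where "a = (i+1) mod 5"
  define b where "b = (i+2) mod 5"
  define d where "d = (i+3) mod 5"
  have abd: "a < 5" "b < 5" "d < 5" "a \<noteq> b" "a \<noteq> d" "b \<noteq> d"
    and nb: "(b = (i+4) mod 5 \<or> b = i \<or> b = (i+1) mod 5) = False"
    and nd: "(d = (i+4) mod 5 \<or> d = i \<or> d = (i+1) mod 5) = False"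
    and ab: "b = (a+1) mod 5" and bd: "d = (b+1) mod 5"
    and ad: "(d = (a+1) mod 5 \<or> a = (d+1) mod 5) = False"
    using i5[OF i] unfolding a_def b_def d_def by (elim disjE; simp)+
  have Cadj: "\<And>p q. p < 5 \<Longrightarrow> q < 5 \<Longrightarrow> E (c p) (c q) \<longleftrightarrow> (q = (p + 1) mod 5 \<or> p = (q + 1) mod 5)"
    and inj: "inj_on c {0..<5}" and CV: "\<And>p. p<5 \<Longrightarrow> c p \<in> V"
    using C unfolding induced_C5_def by blast+
  have e1: "E (c a) (c b)" "E (c b) (c a)" "E (c b) (c d)" "E (c d) (c b)"
    "\<not> E (c a) (c d)" "\<not> E (c d) (c a)"
    using Cadj[of a b, OF abd(1,2)] Cadj[of b a, OF abd(2,1)] Cadj[of b d, OF abd(2,3)]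
      Cadj[of d b, OF abd(3,2)] Cadj[of a d, OF abd(1,3)] Cadj[of d a, OF abd(3,1)] ab bd ad
    by blast+
  have e2: "E x (c a)" "\<not> E x (c b)" "\<not> E x (c d)" "E y (c a)" "\<not> E y (c b)" "\<not> E y (c d)"
    using S13_adj[OF x C i] S13_adj[OF y C i] abd nb nd unfolding a_def by auto
  have e3: "E (c a) x" "\<not> E (c b) x" "\<not> E (c d) x" "E (c a) y" "\<not> E (c b) y" "\<not> E (c d) y"
    using e2 sym by blast+
  have ds: "c a \<noteq> c b" "c a \<noteq> c d" "c b \<noteq> c d"
    using abd inj by (auto dest: inj_onD)
  have dx: "x \<noteq> c a" "x \<noteq> c b" "x \<noteq> c d" "y \<noteq> c a" "y \<noteq> c b" "y \<noteq> c d"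
    using S13_out[OF x] S13_out[OF y] abd by auto
  define f where "f = (\<lambda>n::nat. if n = 0 then x else if n = 1 then c a else if n = 2 then c b
       else if n = 3 then c d else y)"
  have set5: "{0..<5} = {0,1,2,3,4::nat}" by auto
  have "induced_subgraph_of chair_V chair_E V E"
    unfolding induced_subgraph_of_def
  proof (intro exI conjI)
    show "inj_on f chair_V" unfolding chair_V_def set5 f_def
      using ds dx xy by (auto simp: inj_on_def)
    show "f ` chair_V \<subseteq> V" unfolding chair_V_def set5 f_def
      using S13_out[OF x] S13_out[OF y] CV abd by auto
    show "\<forall>p\<in>chair_V. \<forall>q\<in>chair_V. E (f p) (f q) = chair_E p q"
      unfolding chair_V_def set5 f_def chair_E_char
      using e1 e2 e3 nxy nyx irr by simp
  qed
  then show False using cf unfolding H_free_def by blast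
qed

theorem mainTheorem13:
  fixes V :: "'a set" and E :: "'a \<Rightarrow> 'a \<Rightarrow> bool" and c :: "nat \<Rightarrow> 'a"
  assumes "simple_graph V E"
    and "vertex_critical 5 V E"
    and "H_free P5_V P5_E V E"
    and "H_free chair_V chair_E V E"
    and "induced_C5 V E c"
  shows "\<forall>i<5. card (S13 V E c i) \<le> 2"
proof (intro allI impI, rule ccontr)
  fix i :: nat assume i: "i < 5" and "\<not> card (S13 V E c i) \<le> 2"
  then have c3: "2 < card (S13 V E c i)" by simp
  then obtain x y z where xyz: "x \<in> S13 V E c i" "y \<in> S13 V E c i" "z \<in> S13 V E c i"
    "x \<noteq> y" "x \<noteq> z" "y \<noteq> z"
    using three[OF c3] by metis
  have sym: "\<And>u v. E u v \<Longrightarrow> E v u" and irr: "\<And>u. \<not> E u u" and fin: "finite V"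
    using assms(1) unfolding simple_graph_def by blast+
  have Cadj: "\<And>p q. p < 5 \<Longrightarrow> q < 5 \<Longrightarrow> E (c p) (c q) \<longleftrightarrow> (q = (p + 1) mod 5 \<or> p = (q + 1) mod 5)"
    and inj: "inj_on c {0..<5}" and CV: "\<And>p. p<5 \<Longrightarrow> c p \<in> V"
    using assms(5) unfolding induced_C5_def by blast+
  define a where "a = (i+1) mod 5"
  define b where "b = (i+2) mod 5"
  have ab: "a < 5" "b < 5" "a \<noteq> b" "i \<noteq> b" "i \<noteq> a" "a = (i+1) mod 5"
    using i5[OF i] unfolding a_def b_def by (elim disjE; simp)+
  have Eia: "E (c i) (c a)" using Cadj[of i a, OF i ab(1)] ab(6) by blast
  have ds: "c i \<noteq> c b" "c a \<noteq> c b" "c i \<noteq> c a" using ab i inj by (auto dest: inj_onD)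
  have EE: "E x y" "E x z" "E y z"
    using key[OF assms(1,4,5) i] xyz by auto
  have Ex: "E x (c i)" "E x (c a)" "E y (c i)" "E y (c a)" "E z (c i)" "E z (c a)"
    using S13_adj[OF xyz(1) assms(5) i] S13_adj[OF xyz(2) assms(5) i]
      S13_adj[OF xyz(3) assms(5) i] ab i by auto
  have out: "x \<noteq> c j" "y \<noteq> c j" "z \<noteq> c j" "x \<in> V" "y \<in> V" "z \<in> V" if "j < 5" for j
    using S13_out[OF xyz(1) that] S13_out[OF xyz(2) that] S13_out[OF xyz(3) that] by auto
  define W where "W = V - {c b}"
  define F where "F = del_vertex_E E (c b)"
  have "chromatic_number W F < 5"
    using assms(2) CV[OF ab(2)] unfolding vertex_critical_def W_def F_def by blast
  moreover have "\<exists>n. colorable W F n"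
  proof -
    obtain g :: "'a \<Rightarrow> nat" and n where g: "g ` W = {i. i < n}" "inj_on g W"
      using finite_imp_inj_to_nat_seg[of W] fin unfolding W_def by auto
    have "colorable W F n" unfolding colorable_def
    proof (intro exI conjI ballI impI)
      fix u assume "u \<in> W" then show "g u < n" using g by auto
    next
      fix u v assume "u \<in> W" "v \<in> W" "F u v"
      then show "g u \<noteq> g v" using g irr unfolding F_def del_vertex_E_def
        by (metis inj_onD)
    qed
    then show ?thesis by blast
  qed
  ultimately obtain k where k: "k < 5" "colorable W F k"
    unfolding chromatic_number_def by (metis LeastI_ex)
  then obtain col where col: "\<forall>u\<in>W. col u < k" "\<forall>u\<in>W. \<forall>v\<in>W. F u v \<longrightarrow> col u \<noteq> col v"
    unfolding colorable_def by blast
  have inW: "x \<in> W" "y \<in> W" "z \<in> W" "c i \<in> W" "c a \<in> W"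
    using out[OF ab(2)] CV i ab ds unfolding W_def by auto
  have Fs: "F x y" "F x z" "F y z" "F x (c i)" "F x (c a)" "F y (c i)" "F y (c a)"
    "F z (c i)" "F z (c a)" "F (c i) (c a)"
    using EE Ex Eia out[OF ab(2)] ds unfolding F_def del_vertex_E_def by auto
  have dist: "col x \<noteq> col y" "col x \<noteq> col z" "col y \<noteq> col z" "col x \<noteq> col (c i)"
    "col x \<noteq> col (c a)" "col y \<noteq> col (c i)" "col y \<noteq> col (c a)"
    "col z \<noteq> col (c i)" "col z \<noteq> col (c a)" "col (c i) \<noteq> col (c a)"
    using col(2) inW Fs by blast+
  have "card {col x, col y, col z, col (c i), col (c a)} = 5" using dist by simp
  moreover have "{col x, col y, col z, col (c i), col (c a)} \<subseteq> {..<k}"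
    using col(1) inW by auto
  ultimately have "5 \<le> k" by (metis card_lessThan card_mono finite_lessThan)
  then show False using k by simp
qed

end
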